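(* Consider the SEIR$^{\mathrm T}$R$^{\mathrm P}$D system with distributed delays in the context, with constant history data $S(s)=c_S>0$, $I(s)=c_I>0$ for all $s\le0$, and initial data $E(0)=\beta_0c_Ic_S\int_\theta^L\Psi(\tau)\tau\,d\tau$, $R^{\mathrm T}(0)=c_Ip\gamma\int_\epsilon^M\Phi(\rho)\rho\,d\rho$, $R^{\mathrm P}(0)=(1-p)\gamma c_I\int_\theta^L\Psi(\tau)\tau\,d\tau$. Then there exists $r>0$ such that each of the solution functions $S,E,I,R^{\mathrm T},R^{\mathrm P}$ is $r$-increasingly smooth.
   Context: The system is $S'(t)=-\beta(t)I(t)S(t)+p\gamma\int_{0}^{\infty}I(t-\rho)\Phi(\rho)\,d\rho$, $E'(t)=\beta(t)I(t)S(t)-\int_{0}^{\infty}\beta(t-\tau)I(t-\tau)S(t-\tau)\Psi(\tau)\,d\tau$, $I'(t)=\int_{0}^{\infty}\beta(t-\tau)I(t-\tau)S(t-\tau)\Psi(\tau)\,d\tau-\gamma I(t)-\mu I(t)$, $R^{\mathrm T\prime}(t)=p\gamma I(t)-p\gamma\int_{0}^{\infty}I(t-\rho)\Phi(\rho)\,d\rho$, $R^{\mathrm P\prime}(t)=(1-p)\gamma I(t)$, $D'(t)=\mu I(t)$, for $t>0$, with constants $\gamma,\mu\ge0$, $p\in[0,1]$. $\beta$ is a non-negative smooth function on $\mathbb R$ with $\beta(s)=\beta_0$ for $s\le0$. $\Psi,\Phi$ are non-negative Lebesgue integrable probability densities on $[0,\infty)$ with $\operatorname{supp}\Psi\subset[\theta,L]$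 for some $0<\theta<L<\infty$ and $\operatorname{supp}\Phi\subset[\epsilon,M]$ for some $0<\epsilon<M<\infty$. Definition: for $r>0$, a function $f$ defined on $(0,\infty)$ is $r$-increasingly smooth if $f\in C^{n+1}((rn,\infty))$ for every $n=0,1,2,\ldots$. *)

theory Defs
  imports "HOL-Analysis.Analysis"
begin

definition Ck_on :: "nat \<Rightarrow> real set \<Rightarrow> (real \<Rightarrow> real) \<Rightarrow> bool" where
  "Ck_on k U f \<longleftrightarrow>
     (\<forall>j<k. \<forall>x\<in>U. ((deriv ^^ j) f) differentiable (at x)) \<and>
     continuous_on U ((deriv ^^ k) f)"

definition smooth_real :: "(real \<Rightarrow> real) \<Rightarrow> bool" where
  "smooth_real f \<longleftrightarrow> (\<forall>k. Ck_on k UNIV f)"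

definition incr_smooth :: "real \<Rightarrow> (real \<Rightarrow> real) \<Rightarrow> bool" where
  "incr_smooth r f \<longleftrightarrow> (\<forall>n::nat. Ck_on (n + 1) {r * real n<..} f)"

definition prob_density_supp :: "(real \<Rightarrow> real) \<Rightarrow> real \<Rightarrow> real \<Rightarrow> bool" where
  "prob_density_supp F a b \<longleftrightarrow>
     (\<forall>x. 0 \<le> F x) \<and> set_integrable lborel {0..} F \<and>
     (LINT x:{0..}|lborel. F x) = 1 \<and> (\<forall>x. F x \<noteq> 0 \<longrightarrow> x \<in> {a..b})"

end

theory Submission imports Defs begin

lemma Ck_on_0: "Ck_on 0 U f \<longleftrightarrow> continuous_on U f"
  by (simp add: Ck_on_def)

lemma Ck_on_Suc: "Ck_on (Suc k) U f \<longleftrightarrow> (\<forall>x\<in>U. f differentiable (at x)) \<and> Ck_on k U (deriv f)"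
proof -
  have e: "\<And>j. (deriv ^^ Suc j) f = (deriv ^^ j) (deriv f)" by (simp add: funpow_Suc_right del: funpow.simps)
  have a: "\<And>P. (\<forall>j<Suc k. P j) = (P 0 \<and> (\<forall>j<k. P (Suc j)))"
    by (auto simp: less_Suc_eq_0_disj)
  show ?thesis unfolding Ck_on_def a e by simp
qed

lemma Ck_on_subset: "Ck_on k U f \<Longrightarrow> V \<subseteq> U \<Longrightarrow> Ck_on k V f"
  unfolding Ck_on_def by (meson continuous_on_subset subsetD)

lemma Ck_on_cont: "Ck_on k U f \<Longrightarrow> continuous_on U f"
proof (induction k arbitrary: f)
  case 0 then show ?case by (simp add: Ck_on_0)
next
  case (Suc k)
  then show ?case unfolding Ck_on_Suc
    by (meson continuous_at_imp_continuous_on differentiable_imp_continuous_within)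
qed

lemma Ck_on_Suc_D: "Ck_on (Suc k) U f \<Longrightarrow> Ck_on k U f"
proof (induction k arbitrary: f)
  case 0 then show ?case using Ck_on_cont Ck_on_0 by blast
next
  case (Suc k)
  then show ?case unfolding Ck_on_Suc[of "Suc k"] by (simp add: Ck_on_Suc[of k])
qed

lemma Ck_on_cong:
  assumes "open U" "\<And>x. x \<in> U \<Longrightarrow> f x = g x"
  shows "Ck_on k U f \<longleftrightarrow> Ck_on k U g"
  using assms(2)
proof (induction k arbitrary: f g)
  case 0 then show ?case by (simp add: Ck_on_0 cong: continuous_on_cong)
next
  case (Suc k)
  have ev: "eventually (\<lambda>y. f y = g y) (nhds x)" if "x \<in> U" for x
    using Suc.prems assms(1) that eventually_nhds by blast
  have d: "f differentiable (at x) \<longleftrightarrow> g differentiable (at x)" if "x \<in> U" for x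
    using ev[OF that] by (metis DERIV_cong_ev DERIV_deriv_iff_real_differentiable deriv_cong_ev)
  have dd: "deriv f x = deriv g x" if "x \<in> U" for x
    using ev[OF that] deriv_cong_ev by blast
  show ?case unfolding Ck_on_Suc using d Suc.IH[OF dd] by auto
qed

lemma Ck_on_deriv:
  assumes "open U" "\<And>x. x \<in> U \<Longrightarrow> (f has_real_derivative f' x) (at x)" "Ck_on k U f'"
  shows "Ck_on (Suc k) U f"
proof -
  have "deriv f x = f' x" if "x \<in> U" for x using assms(2)[OF that] DERIV_imp_deriv by blast
  then have "Ck_on k U (deriv f)" using Ck_on_cong[OF assms(1)] assms(3) by metis
  moreover have "\<forall>x\<in>U. f differentiable (at x)"
    using assms(2) real_differentiable_def by blast
  ultimately show ?thesis by (simp add: Ck_on_Suc)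
qed

lemma Ck_on_const: "open U \<Longrightarrow> Ck_on k U (\<lambda>x. c)"
proof (induction k arbitrary: c)
  case 0 then show ?case by (simp add: Ck_on_0)
next
  case (Suc k) then show ?case by (intro Ck_on_deriv[where f'="\<lambda>x. 0"]) auto
qed

lemma Ck_on_add: "open U \<Longrightarrow> Ck_on k U f \<Longrightarrow> Ck_on k U g \<Longrightarrow> Ck_on k U (\<lambda>x. f x + g x)"
proof (induction k arbitrary: f g)
  case 0 then show ?case by (simp add: Ck_on_0 continuous_on_add)
next
  case (Suc k)
  show ?case
  proof (rule Ck_on_deriv[where f'="\<lambda>x. deriv f x + deriv g x"])
    show "open U" by fact
    fix x assume "x \<in> U"
    then show "((\<lambda>x. f x + g x) has_real_derivative deriv f x + deriv g x) (at x)"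
      using Suc.prems by (intro DERIV_add) (auto simp: Ck_on_Suc DERIV_deriv_iff_real_differentiable)
  next
    show "Ck_on k U (\<lambda>x. deriv f x + deriv g x)"
      using Suc by (auto simp: Ck_on_Suc)
  qed
qed

lemma Ck_on_mult: "open U \<Longrightarrow> Ck_on k U f \<Longrightarrow> Ck_on k U g \<Longrightarrow> Ck_on k U (\<lambda>x. f x * g x)"
proof (induction k arbitrary: f g)
  case 0 then show ?case by (simp add: Ck_on_0 continuous_on_mult)
next
  case (Suc k)
  show ?case
  proof (rule Ck_on_deriv[where f'="\<lambda>x. deriv f x * g x + deriv g x * f x"])
    show "open U" by fact
    fix x assume "x \<in> U"
    then show "((\<lambda>x. f x * g x) has_real_derivative deriv f x * g x + deriv g x * f x) (at x)"
      using Suc.prems by (intro DERIV_mult) (auto simp: Ck_on_Suc DERIV_deriv_iff_real_differentiable)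
  next
    have "Ck_on k U (\<lambda>x. deriv f x * g x)"
      using Suc Ck_on_Suc_D by (auto simp: Ck_on_Suc)
    moreover have "Ck_on k U (\<lambda>x. deriv g x * f x)"
      using Suc Ck_on_Suc_D by (auto simp: Ck_on_Suc)
    ultimately show "Ck_on k U (\<lambda>x. deriv f x * g x + deriv g x * f x)"
      using Ck_on_add Suc.prems(1) by blast
  qed
qed

lemma Ck_on_cmult: "open U \<Longrightarrow> Ck_on k U f \<Longrightarrow> Ck_on k U (\<lambda>x. c * f x)"
  using Ck_on_mult[of U k "\<lambda>x. c" f] Ck_on_const by blast

lemma Ck_on_diff: "open U \<Longrightarrow> Ck_on k U f \<Longrightarrow> Ck_on k U g \<Longrightarrow> Ck_on k U (\<lambda>x. f x - g x)"
  using Ck_on_add[of U k f "\<lambda>x. (-1) * g x"] Ck_on_cmult[of U k g "-1"] by simp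


definition conv :: "(real \<Rightarrow> real) \<Rightarrow> (real \<Rightarrow> real) \<Rightarrow> real \<Rightarrow> real" where
  "conv g K t = (LINT \<tau>|lborel. g (t - \<tau>) * K \<tau>)"

lemma conv_integrable:
  fixes K g :: "real \<Rightarrow> real" and c d t :: real
  assumes K: "integrable lborel K" and supp: "\<And>\<tau>. K \<tau> \<noteq> 0 \<Longrightarrow> c \<le> \<tau> \<and> \<tau> \<le> d"
    and cd: "c \<le> d" and g: "continuous_on {t-d..t-c} g"
  shows "integrable lborel (\<lambda>\<tau>. g (t - \<tau>) * K \<tau>)"
proof -
  define G where "G \<tau> = g (t - max c (min d \<tau>))" for \<tau>
  have cm: "continuous_on UNIV (\<lambda>x::real. max c (min d x))"
    by (intro continuous_on_max continuous_on_min continuous_on_const continuous_on_id)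
  have Gc: "continuous_on UNIV G" unfolding G_def
    by (rule continuous_on_compose2[OF g]) (use cd cm in \<open>auto intro!: continuous_intros simp: max_def min_def\<close>)
  have "G ` UNIV \<subseteq> g ` {t-d..t-c}" unfolding G_def
    using cd by (auto intro!: imageI simp: max_def min_def)
  moreover have "bounded (g ` {t-d..t-c})"
    by (intro compact_imp_bounded compact_continuous_image g) auto
  ultimately have "bounded (G ` UNIV)" using bounded_subset by blast
  then obtain B0 where B0: "\<And>x. norm (G x) \<le> B0" unfolding bounded_iff by auto
  define B where "B = max B0 0"
  have B: "\<And>x. \<bar>G x\<bar> \<le> B" "B \<ge> 0" using B0 unfolding B_def by (auto intro: max.coboundedI1)
  have eq: "(\<lambda>\<tau>. g (t - \<tau>) * K \<tau>) = (\<lambda>\<tau>. G \<tau> * K \<tau>)"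
  proof
    fix \<tau> show "g (t - \<tau>) * K \<tau> = G \<tau> * K \<tau>"
      using supp[of \<tau>] cd unfolding G_def by (cases "K \<tau> = 0") auto
  qed
  have "integrable lborel (\<lambda>\<tau>. B * K \<tau>)" using K by simp
  moreover have "(\<lambda>\<tau>. G \<tau> * K \<tau>) \<in> borel_measurable lborel"
    using borel_measurable_continuous_onI[OF Gc] K by (auto intro!: borel_measurable_times)
  moreover have "AE x in lborel. norm (G x * K x) \<le> norm (B * K x)"
    using B by (auto simp: abs_mult intro!: mult_right_mono)
  ultimately show ?thesis unfolding eq using Bochner_Integration.integrable_bound by blast
qed

lemma conv_cont:
  fixes K g :: "real \<Rightarrow> real" and a c d :: real
  assumes K: "integrable lborel K" and supp: "\<And>\<tau>. K \<tau> \<noteq> 0 \<Longrightarrow> c \<le> \<tau> \<and> \<tau> \<le> d"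
    and cd: "c \<le> d" and g: "continuous_on {a<..} g"
  shows "continuous_on {a+d<..} (conv g K)"
proof -
  have "isCont (conv g K) t0" if t0: "a + d < t0" for t0
  proof -
    define \<eta> where "\<eta> = (t0 - a - d) / 2"
    have \<eta>: "\<eta> > 0" using t0 unfolding \<eta>_def by simp
    define J where "J = {t0 - d - \<eta> .. t0 - c + \<eta>}"
    have "t0 - d - \<eta> > a" using t0 unfolding \<eta>_def by (simp add: field_simps)
    then have JU: "J \<subseteq> {a<..}" unfolding J_def by auto
    have uc: "uniformly_continuous_on J g"
      unfolding J_def by (rule compact_uniformly_continuous) (use g JU J_def continuous_on_subset in auto)
    define B where "B = (LINT \<tau>|lborel. \<bar>K \<tau>\<bar>)"
    have B0: "B \<ge> 0" unfolding B_def by simp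
    have int: "integrable lborel (\<lambda>\<tau>. g (t - \<tau>) * K \<tau>)" if "\<bar>t - t0\<bar> \<le> \<eta>" for t
    proof (rule conv_integrable[OF K supp cd])
      have "{t-d..t-c} \<subseteq> J" using that unfolding J_def by auto
      then show "continuous_on {t - d..t - c} g" using JU g continuous_on_subset by blast
    qed
    show ?thesis unfolding isCont_def LIM_eq
    proof (intro allI impI)
      fix e :: real assume e: "e > 0"
      define e' where "e' = e / (B + 1)"
      have e': "e' > 0" using e B0 unfolding e'_def by simp
      obtain \<delta> where \<delta>0: "\<delta> > 0" and \<delta>: "\<And>x x'. x\<in>J \<Longrightarrow> x'\<in>J \<Longrightarrow> dist x' x < \<delta> \<Longrightarrow> dist (g x') (g x) < e'"
        using uc e' unfolding uniformly_continuous_on_def by metis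
      show "\<exists>s>0. \<forall>t. t \<noteq> t0 \<and> norm (t - t0) < s \<longrightarrow> norm (conv g K t - conv g K t0) < e"
      proof (rule exI[of _ "min \<delta> \<eta>"], intro conjI allI impI)
        show "min \<delta> \<eta> > 0" using \<delta>0 \<eta> by simp
        fix t assume "t \<noteq> t0 \<and> norm (t - t0) < min \<delta> \<eta>"
        then have tt: "\<bar>t - t0\<bar> < \<delta>" "\<bar>t - t0\<bar> < \<eta>" by auto
        have i1: "integrable lborel (\<lambda>\<tau>. g (t - \<tau>) * K \<tau>)" using int tt by simp
        have i0: "integrable lborel (\<lambda>\<tau>. g (t0 - \<tau>) * K \<tau>)" using int \<eta> by simp
        have "(\<lambda>\<tau>. (g (t-\<tau>) - g (t0-\<tau>)) * K \<tau>) = (\<lambda>\<tau>. g (t-\<tau>) * K \<tau> - g (t0-\<tau>) * K \<tau>)"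
          by (simp add: left_diff_distrib)
        then have eq: "conv g K t - conv g K t0 = (LINT \<tau>|lborel. (g (t-\<tau>) - g (t0-\<tau>)) * K \<tau>)"
          unfolding conv_def using Bochner_Integration.integral_diff[OF i1 i0] by simp
        have "norm (conv g K t - conv g K t0) \<le> (LINT \<tau>|lborel. e' * \<bar>K \<tau>\<bar>)"
          unfolding eq
        proof (rule Bochner_Integration.integral_norm_bound_integral)
          show "integrable lborel (\<lambda>\<tau>. (g (t-\<tau>) - g (t0-\<tau>)) * K \<tau>)"
            unfolding left_diff_distrib using i1 i0 by simp
          show "integrable lborel (\<lambda>\<tau>. e' * \<bar>K \<tau>\<bar>)" using K by simp
          fix \<tau> :: real
          show "norm ((g (t-\<tau>) - g (t0-\<tau>)) * K \<tau>) \<le> e' * \<bar>K \<tau>\<bar>"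
          proof (cases "K \<tau> = 0")
            case False
            then have "c \<le> \<tau>" "\<tau> \<le> d" using supp by auto
            then have "t - \<tau> \<in> J" "t0 - \<tau> \<in> J" using tt \<eta> unfolding J_def by auto
            moreover have "dist (t - \<tau>) (t0 - \<tau>) < \<delta>" using tt by (simp add: dist_real_def)
            ultimately have "dist (g (t - \<tau>)) (g (t0 - \<tau>)) < e'" using \<delta> by blast
            then show ?thesis by (simp add: abs_mult dist_real_def mult_right_mono)
          qed simp
        qed
        also have "\<dots> = e' * B" unfolding B_def by simp
        also have "\<dots> < e" using e B0 unfolding e'_def by (simp add: field_simps)
        finally show "norm (conv g K t - conv g K t0) < e" .
      qed
    qed
  qed
  then show ?thesis by (simp add: continuous_on_eq_continuous_at)
qed


lemma mvt_between:
  fixes g :: "real \<Rightarrow> real"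
  assumes "\<And>z. min x y \<le> z \<Longrightarrow> z \<le> max x y \<Longrightarrow> g differentiable (at z)"
  shows "\<exists>\<xi>. min x y \<le> \<xi> \<and> \<xi> \<le> max x y \<and> g y - g x = (y - x) * deriv g \<xi>"
proof (cases x y rule: linorder_cases)
  case less
  have "\<exists>z. x < z \<and> z < y \<and> g y - g x = (y - x) * deriv g z"
    by (rule MVT2[OF less]) (use assms less in \<open>auto simp: DERIV_deriv_iff_real_differentiable\<close>)
  then obtain z where "x < z" "z < y" "g y - g x = (y - x) * deriv g z" by blast
  then show ?thesis using less by (intro exI[of _ z]) auto
next
  case equal then show ?thesis by auto
next
  case greater
  have "\<exists>z. y < z \<and> z < x \<and> g x - g y = (x - y) * deriv g z"
    by (rule MVT2[OF greater]) (use assms greater in \<open>auto simp: DERIV_deriv_iff_real_differentiable\<close>)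
  then obtain z where "y < z" "z < x" "g x - g y = (x - y) * deriv g z" by blast
  then show ?thesis using greater by (intro exI[of _ z]) (auto simp: algebra_simps)
qed

lemma conv_deriv:
  fixes K g :: "real \<Rightarrow> real" and a c d t0 :: real
  assumes K: "integrable lborel K" and supp: "\<And>\<tau>. K \<tau> \<noteq> 0 \<Longrightarrow> c \<le> \<tau> \<and> \<tau> \<le> d"
    and cd: "c \<le> d" and dg: "\<And>x. a < x \<Longrightarrow> g differentiable (at x)"
    and cg: "continuous_on {a<..} (deriv g)" and t0: "a + d < t0"
  shows "(conv g K has_real_derivative conv (deriv g) K t0) (at t0)"
proof -
  have g: "continuous_on {a<..} g"
    using dg by (meson continuous_at_imp_continuous_on differentiable_imp_continuous_within greaterThan_iff)
  define \<eta> where "\<eta> = (t0 - a - d) / 2"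
  have \<eta>: "\<eta> > 0" using t0 unfolding \<eta>_def by simp
  define J where "J = {t0 - d - \<eta> .. t0 - c + \<eta>}"
  have "t0 - d - \<eta> > a" using t0 unfolding \<eta>_def by (simp add: field_simps)
  then have JU: "J \<subseteq> {a<..}" unfolding J_def by auto
  have uc: "uniformly_continuous_on J (deriv g)"
    unfolding J_def by (rule compact_uniformly_continuous) (use cg JU J_def continuous_on_subset in auto)
  define B where "B = (LINT \<tau>|lborel. \<bar>K \<tau>\<bar>)"
  have B0: "B \<ge> 0" unfolding B_def by simp
  have int: "integrable lborel (\<lambda>\<tau>. h (t - \<tau>) * K \<tau>)" if "\<bar>t - t0\<bar> \<le> \<eta>" "continuous_on {a<..} h" for t h
  proof (rule conv_integrable[OF K supp cd])
    have "{t-d..t-c} \<subseteq> J" using that unfolding J_def by auto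
    then show "continuous_on {t - d..t - c} h" using JU that(2) continuous_on_subset by blast
  qed
  show ?thesis unfolding has_field_derivative_iff LIM_eq
  proof (intro allI impI)
    fix e :: real assume e: "e > 0"
    define e' where "e' = e / (B + 1)"
    have e': "e' > 0" using e B0 unfolding e'_def by simp
    obtain \<delta> where \<delta>0: "\<delta> > 0" and \<delta>: "\<And>x x'. x\<in>J \<Longrightarrow> x'\<in>J \<Longrightarrow> dist x' x < \<delta> \<Longrightarrow> dist (deriv g x') (deriv g x) < e'"
      using uc e' unfolding uniformly_continuous_on_def by metis
    show "\<exists>s>0. \<forall>t. t \<noteq> t0 \<and> norm (t - t0) < s \<longrightarrow>
       norm ((conv g K t - conv g K t0) / (t - t0) - conv (deriv g) K t0) < e"
    proof (rule exI[of _ "min \<delta> \<eta>"], intro conjI allI impI)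
      show "min \<delta> \<eta> > 0" using \<delta>0 \<eta> by simp
      fix t assume tt0: "t \<noteq> t0 \<and> norm (t - t0) < min \<delta> \<eta>"
      then have tt: "\<bar>t - t0\<bar> < \<delta>" "\<bar>t - t0\<bar> < \<eta>" "t - t0 \<noteq> 0" by auto
      have i1: "integrable lborel (\<lambda>\<tau>. g (t - \<tau>) * K \<tau>)" using int tt g by simp
      have i0: "integrable lborel (\<lambda>\<tau>. g (t0 - \<tau>) * K \<tau>)" using int \<eta> g by simp
      have i2: "integrable lborel (\<lambda>\<tau>. (t - t0) * (deriv g (t0 - \<tau>) * K \<tau>))" using int[OF _ cg] \<eta> by simp
      define N where "N = (\<lambda>\<tau>. (g (t-\<tau>) - g (t0-\<tau>) - (t - t0) * deriv g (t0 - \<tau>)) * K \<tau>)"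
      have Neq: "N = (\<lambda>\<tau>. (g (t-\<tau>) * K \<tau> - g (t0-\<tau>) * K \<tau>) - (t - t0) * (deriv g (t0 - \<tau>) * K \<tau>))"
        unfolding N_def by (auto simp: algebra_simps)
      have iN: "integrable lborel N" unfolding Neq using i1 i0 i2 by simp
      have eq: "conv g K t - conv g K t0 - (t - t0) * conv (deriv g) K t0 = (LINT \<tau>|lborel. N \<tau>)"
        unfolding Neq conv_def
        using Bochner_Integration.integral_diff[OF Bochner_Integration.integrable_diff[OF i1 i0] i2]
          Bochner_Integration.integral_diff[OF i1 i0] by simp
      have "norm (LINT \<tau>|lborel. N \<tau>) \<le> (LINT \<tau>|lborel. (e' * \<bar>t - t0\<bar>) * \<bar>K \<tau>\<bar>)"
      proof (rule Bochner_Integration.integral_norm_bound_integral[OF iN])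
        show "integrable lborel (\<lambda>\<tau>. (e' * \<bar>t - t0\<bar>) * \<bar>K \<tau>\<bar>)" using K by simp
        fix \<tau> :: real
        show "norm (N \<tau>) \<le> (e' * \<bar>t - t0\<bar>) * \<bar>K \<tau>\<bar>"
        proof (cases "K \<tau> = 0")
          case False
          then have "c \<le> \<tau>" "\<tau> \<le> d" using supp by auto
          then have J2: "t - \<tau> \<in> J" "t0 - \<tau> \<in> J" using tt \<eta> unfolding J_def by auto
          have "\<exists>\<xi>. min (t0-\<tau>) (t-\<tau>) \<le> \<xi> \<and> \<xi> \<le> max (t0-\<tau>) (t-\<tau>) \<and>
                g (t-\<tau>) - g (t0-\<tau>) = ((t-\<tau>) - (t0-\<tau>)) * deriv g \<xi>"
          proof (rule mvt_between)
            fix z assume "min (t0 - \<tau>) (t - \<tau>) \<le> z" "z \<le> max (t0 - \<tau>) (t - \<tau>)"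
            then have "z \<in> J" using J2 unfolding J_def by auto
            then show "g differentiable at z" using JU dg by auto
          qed
          then obtain \<xi> where \<xi>: "min (t0-\<tau>) (t-\<tau>) \<le> \<xi>" "\<xi> \<le> max (t0-\<tau>) (t-\<tau>)"
            "g (t-\<tau>) - g (t0-\<tau>) = (t - t0) * deriv g \<xi>" by auto
          have "\<xi> \<in> J" using J2 \<xi>(1,2) unfolding J_def by auto
          moreover have "dist \<xi> (t0 - \<tau>) < \<delta>" using \<xi>(1,2) tt by (auto simp: dist_real_def)
          ultimately have dd: "\<bar>deriv g \<xi> - deriv g (t0 - \<tau>)\<bar> < e'" using \<delta> J2 by (auto simp: dist_real_def)
          have "N \<tau> = (t - t0) * (deriv g \<xi> - deriv g (t0 - \<tau>)) * K \<tau>"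
            unfolding N_def \<xi>(3) by (simp add: algebra_simps)
          then have "norm (N \<tau>) = \<bar>t - t0\<bar> * \<bar>deriv g \<xi> - deriv g (t0 - \<tau>)\<bar> * \<bar>K \<tau>\<bar>"
            by (simp add: abs_mult)
          also have "\<dots> \<le> \<bar>t - t0\<bar> * e' * \<bar>K \<tau>\<bar>"
            using dd by (intro mult_right_mono mult_left_mono) auto
          finally show ?thesis by (simp add: algebra_simps)
        qed (simp add: N_def)
      qed
      also have "\<dots> = e' * \<bar>t - t0\<bar> * B" unfolding B_def by simp
      finally have nb: "\<bar>conv g K t - conv g K t0 - (t - t0) * conv (deriv g) K t0\<bar> \<le> e' * \<bar>t - t0\<bar> * B"
        unfolding eq by simp
      have "(conv g K t - conv g K t0) / (t - t0) - conv (deriv g) K t0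
          = (conv g K t - conv g K t0 - (t - t0) * conv (deriv g) K t0) / (t - t0)"
        using tt(3) by (simp add: field_simps)
      then have "norm ((conv g K t - conv g K t0) / (t - t0) - conv (deriv g) K t0)
          = \<bar>conv g K t - conv g K t0 - (t - t0) * conv (deriv g) K t0\<bar> / \<bar>t - t0\<bar>"
        by (simp add: abs_divide)
      also have "\<dots> \<le> e' * B"
        using nb tt(3) by (simp add: divide_le_eq mult_ac)
      also have "\<dots> < e" using e B0 unfolding e'_def by (simp add: field_simps)
      finally show "norm ((conv g K t - conv g K t0) / (t - t0) - conv (deriv g) K t0) < e" .
    qed
  qed
qed

lemma conv_Ck:
  fixes K g :: "real \<Rightarrow> real" and a c d :: real
  assumes K: "integrable lborel K" and supp: "\<And>\<tau>. K \<tau> \<noteq> 0 \<Longrightarrow> c \<le> \<tau> \<and> \<tau> \<le> d"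
    and cd: "c \<le> d"
  shows "Ck_on k {a<..} g \<Longrightarrow> Ck_on k {a+d<..} (conv g K)"
proof (induction k arbitrary: g)
  case 0 then show ?case using conv_cont[OF K supp cd] by (simp add: Ck_on_0)
next
  case (Suc k)
  have dg: "\<And>x. a < x \<Longrightarrow> g differentiable (at x)" and Ck: "Ck_on k {a<..} (deriv g)"
    using Suc.prems by (auto simp: Ck_on_Suc)
  have cg: "continuous_on {a<..} (deriv g)" using Ck Ck_on_cont by blast
  show ?case
  proof (rule Ck_on_deriv[where f'="conv (deriv g) K"])
    fix x assume "x \<in> {a+d<..}"
    then show "(conv g K has_real_derivative conv (deriv g) K x) (at x)"
      using conv_deriv[OF K supp cd dg cg] by auto
  qed (use Suc.IH[OF Ck] in auto)
qed


lemma Ck_on_minus: "open U \<Longrightarrow> Ck_on k U f \<Longrightarrow> Ck_on k U (\<lambda>x. - f x)"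
  using Ck_on_cmult[of U k f "-1"] by simp

lemma set_int_supp:
  fixes F h :: "real \<Rightarrow> real"
  assumes "\<And>\<tau>. F \<tau> \<noteq> 0 \<Longrightarrow> 0 \<le> \<tau>"
  shows "(LINT \<tau>:{0..}|lborel. h \<tau> * F \<tau>) = (LINT \<tau>|lborel. h \<tau> * F \<tau>)"
proof -
  have "(\<lambda>\<tau>. indicator {0..} \<tau> *\<^sub>R (h \<tau> * F \<tau>)) = (\<lambda>\<tau>. h \<tau> * F \<tau>)"
  proof
    fix \<tau> show "indicator {0..} \<tau> *\<^sub>R (h \<tau> * F \<tau>) = h \<tau> * F \<tau>"
      by (cases "F \<tau> = 0") (use assms[of \<tau>] in \<open>auto simp: indicator_def\<close>)
  qed
  then show ?thesis unfolding set_lebesgue_integral_def by simp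
qed

lemma pds_facts:
  assumes "prob_density_supp F a b" "0 < a"
  shows "integrable lborel F" "\<And>\<tau>. F \<tau> \<noteq> 0 \<Longrightarrow> a \<le> \<tau> \<and> \<tau> \<le> b" "\<And>\<tau>. F \<tau> \<noteq> 0 \<Longrightarrow> 0 \<le> \<tau>"
proof -
  show s: "\<And>\<tau>. F \<tau> \<noteq> 0 \<Longrightarrow> a \<le> \<tau> \<and> \<tau> \<le> b" using assms(1) unfolding prob_density_supp_def by auto
  then show "\<And>\<tau>. F \<tau> \<noteq> 0 \<Longrightarrow> 0 \<le> \<tau>" using assms(2) by force
  have "(\<lambda>\<tau>. indicator {0..} \<tau> *\<^sub>R F \<tau>) = F"
  proof
    fix \<tau> show "indicator {0..} \<tau> *\<^sub>R F \<tau> = F \<tau>"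
      by (cases "F \<tau> = 0") (use s[of \<tau>] assms(2) in \<open>auto simp: indicator_def\<close>)
  qed
  then show "integrable lborel F" using assms(1) unfolding prob_density_supp_def set_integrable_def by simp
qed

lemma const_left_cont:
  fixes S :: "real \<Rightarrow> real"
  assumes "continuous_on {0..} S" "\<forall>s\<le>0. S s = c"
  shows "continuous_on UNIV S"
proof -
  have "continuous_on {..0} S"
    by (rule continuous_on_eq[OF continuous_on_const[of _ c]]) (use assms(2) in auto)
  then have "continuous_on ({..0} \<union> {0..}) S"
    using assms(1) by (intro continuous_on_closed_Un) auto
  moreover have "{..0} \<union> {0::real..} = UNIV" by auto
  ultimately show ?thesis by simp
qed

theorem theorem4:
  fixes S E I RT RP D \<beta> \<Psi> \<Phi> :: "real \<Rightarrow> real"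
    and \<beta>0 \<gamma> \<mu> p \<theta> L \<epsilon> M cS cI :: real
  assumes params: "0 \<le> \<gamma>" "0 \<le> \<mu>" "0 \<le> p" "p \<le> 1"
    and beta: "smooth_real \<beta>" "\<forall>s. 0 \<le> \<beta> s" "\<forall>s\<le>0. \<beta> s = \<beta>0"
    and Psi: "0 < \<theta>" "\<theta> < L" "prob_density_supp \<Psi> \<theta> L"
    and Phi: "0 < \<epsilon>" "\<epsilon> < M" "prob_density_supp \<Phi> \<epsilon> M"
    and hist: "0 < cS" "0 < cI" "\<forall>s\<le>0. S s = cS" "\<forall>s\<le>0. I s = cI"
    and init: "E 0 = \<beta>0 * cI * cS * (LINT \<tau>:{\<theta>..L}|lborel. \<Psi> \<tau> * \<tau>)"
              "RT 0 = cI * p * \<gamma> * (LINT \<rho>:{\<epsilon>..M}|lborel. \<Phi> \<rho> * \<rho>)"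
              "RP 0 = (1 - p) * \<gamma> * cI * (LINT \<tau>:{\<theta>..L}|lborel. \<Psi> \<tau> * \<tau>)"
    and cont: "continuous_on {0..} S" "continuous_on {0..} E" "continuous_on {0..} I"
              "continuous_on {0..} RT" "continuous_on {0..} RP" "continuous_on {0..} D"
    and eqS: "\<forall>t>0. (S has_real_derivative
               (- \<beta> t * I t * S t + p * \<gamma> * (LINT \<rho>:{0..}|lborel. I (t - \<rho>) * \<Phi> \<rho>))) (at t)"
    and eqE: "\<forall>t>0. (E has_real_derivative
               (\<beta> t * I t * S t
                - (LINT \<tau>:{0..}|lborel. \<beta> (t - \<tau>) * I (t - \<tau>) * S (t - \<tau>) * \<Psi> \<tau>))) (at t)"
    and eqI: "\<forall>t>0. (I has_real_derivative
               ((LINT \<tau>:{0..}|lborel. \<beta> (t - \<tau>) * I (t - \<tau>) * S (t - \<tau>) * \<Psi> \<tau>)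
                - \<gamma> * I t - \<mu> * I t)) (at t)"
    and eqRT: "\<forall>t>0. (RT has_real_derivative
               (p * \<gamma> * I t - p * \<gamma> * (LINT \<rho>:{0..}|lborel. I (t - \<rho>) * \<Phi> \<rho>))) (at t)"
    and eqRP: "\<forall>t>0. (RP has_real_derivative ((1 - p) * \<gamma> * I t)) (at t)"
    and eqD: "\<forall>t>0. (D has_real_derivative (\<mu> * I t)) (at t)"
  shows "\<exists>r>0. incr_smooth r S \<and> incr_smooth r E \<and> incr_smooth r I
                \<and> incr_smooth r RT \<and> incr_smooth r RP"
proof -
  define r where "r = max L M"
  have r: "r > 0" "L \<le> r" "M \<le> r" using Psi Phi unfolding r_def by auto
  note Ps = pds_facts[OF Psi(3) Psi(1)]
  note Ph = pds_facts[OF Phi(3) Phi(1)]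
  have Sc: "continuous_on UNIV S" using const_left_cont cont(1) hist(3) by blast
  have Ic: "continuous_on UNIV I" using const_left_cont cont(3) hist(4) by blast
  define CI where "CI = conv I \<Phi>"
  define CB where "CB = conv (\<lambda>s. \<beta> s * I s * S s) \<Psi>"
  have CIe: "(LINT \<rho>:{0..}|lborel. I (t - \<rho>) * \<Phi> \<rho>) = CI t" for t
    unfolding CI_def conv_def using set_int_supp[of \<Phi> "\<lambda>\<rho>. I (t - \<rho>)"] Ph(3) by simp
  have CBe: "(LINT \<tau>:{0..}|lborel. \<beta> (t - \<tau>) * I (t - \<tau>) * S (t - \<tau>) * \<Psi> \<tau>) = CB t" for t
    unfolding CB_def conv_def using set_int_supp[of \<Psi> "\<lambda>\<tau>. \<beta> (t - \<tau>) * I (t - \<tau>) * S (t - \<tau>)"] Ps(3) by simp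
  have dS: "\<And>t. t > 0 \<Longrightarrow> (S has_real_derivative (- \<beta> t * I t * S t + p * \<gamma> * CI t)) (at t)"
    using eqS CIe by simp
  have dE: "\<And>t. t > 0 \<Longrightarrow> (E has_real_derivative (\<beta> t * I t * S t - CB t)) (at t)"
    using eqE CBe by simp
  have dI: "\<And>t. t > 0 \<Longrightarrow> (I has_real_derivative (CB t - \<gamma> * I t - \<mu> * I t)) (at t)"
    using eqI CBe by simp
  have dRT: "\<And>t. t > 0 \<Longrightarrow> (RT has_real_derivative (p * \<gamma> * I t - p * \<gamma> * CI t)) (at t)"
    using eqRT CIe by simp
  have dRP: "\<And>t. t > 0 \<Longrightarrow> (RP has_real_derivative ((1 - p) * \<gamma> * I t)) (at t)"
    using eqRP by simp
  have step: "Ck_on (Suc n) {r * real n<..} S \<and> Ck_on (Suc n) {r * real n<..} E \<and>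
      Ck_on (Suc n) {r * real n<..} I \<and> Ck_on (Suc n) {r * real n<..} RT \<and> Ck_on (Suc n) {r * real n<..} RP"
    if hS: "Ck_on n {r * (real n - 1)<..} S" and hI: "Ck_on n {r * (real n - 1)<..} I" for n
  proof -
    define U where "U = {r * real n<..}"
    define V where "V = {r * (real n - 1)<..}"
    have oU: "open U" "open V" unfolding U_def V_def by auto
    have UV: "U \<subseteq> V" unfolding U_def V_def using r by auto
    have U0: "\<And>t. t \<in> U \<Longrightarrow> t > 0" unfolding U_def using r
      by (auto intro: le_less_trans[of 0 "r * real n"])
    have bV: "Ck_on n V \<beta>" using beta(1) unfolding smooth_real_def using Ck_on_subset by blast
    have BIS: "Ck_on n V (\<lambda>s. \<beta> s * I s * S s)" using oU bV hS hI unfolding V_def[symmetric]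
      by (intro Ck_on_mult) auto
    have "Ck_on n {r * (real n - 1) + M<..} CI" unfolding CI_def
      using conv_Ck[OF Ph(1) Ph(2), where a="r * (real n - 1)" and k=n and g=I] hI Phi by auto
    moreover have "U \<subseteq> {r * (real n - 1) + M<..}" unfolding U_def using r by (auto simp: algebra_simps)
    ultimately have CIU: "Ck_on n U CI" using Ck_on_subset by blast
    have "Ck_on n {r * (real n - 1) + L<..} CB" unfolding CB_def
      using conv_Ck[OF Ps(1) Ps(2), where a="r * (real n - 1)" and k=n and g="\<lambda>s. \<beta> s * I s * S s"] BIS Psi unfolding V_def by auto
    moreover have "U \<subseteq> {r * (real n - 1) + L<..}" unfolding U_def using r by (auto simp: algebra_simps)
    ultimately have CBU: "Ck_on n U CB" using Ck_on_subset by blast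
    have bU: "Ck_on n U \<beta>" and IU: "Ck_on n U I" and SU: "Ck_on n U S"
      using bV hI hS UV Ck_on_subset unfolding V_def by blast+
    have cS: "Ck_on n U (\<lambda>t. - \<beta> t * I t * S t + p * \<gamma> * CI t)"
      using oU(1) bU IU SU CIU by (intro Ck_on_add Ck_on_mult Ck_on_minus Ck_on_cmult) auto
    have cE: "Ck_on n U (\<lambda>t. \<beta> t * I t * S t - CB t)"
      using oU(1) bU IU SU CBU by (intro Ck_on_diff Ck_on_mult) auto
    have cI: "Ck_on n U (\<lambda>t. CB t - \<gamma> * I t - \<mu> * I t)"
      using oU(1) IU CBU by (intro Ck_on_diff Ck_on_cmult) auto
    have cRT: "Ck_on n U (\<lambda>t. p * \<gamma> * I t - p * \<gamma> * CI t)"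
      using oU(1) IU CIU by (intro Ck_on_diff Ck_on_cmult) auto
    have cRP: "Ck_on n U (\<lambda>t. (1 - p) * \<gamma> * I t)"
      using oU(1) IU by (intro Ck_on_cmult) auto
    show ?thesis unfolding U_def[symmetric]
      using Ck_on_deriv[OF oU(1) dS cS] Ck_on_deriv[OF oU(1) dE cE] Ck_on_deriv[OF oU(1) dI cI]
        Ck_on_deriv[OF oU(1) dRT cRT] Ck_on_deriv[OF oU(1) dRP cRP] U0 by auto
  qed
  have ind: "Ck_on n {r * (real n - 1)<..} S \<and> Ck_on n {r * (real n - 1)<..} I" for n
  proof (induction n)
    case 0 then show ?case using Sc Ic by (auto simp: Ck_on_0 intro: continuous_on_subset)
  next
    case (Suc n)
    then show ?case using step[of n] by simp
  qed
  have "incr_smooth r S \<and> incr_smooth r E \<and> incr_smooth r I \<and> incr_smooth r RT \<and> incr_smooth r RP"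
    unfolding incr_smooth_def using step ind by simp
  then show ?thesis using r(1) by blast
qed

end
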